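(* Let $\varrho=\sum_{\omega\in\Omega}\varrho(\omega)|\omega\rangle\langle\omega|$ and $\sigma=\sum_{\omega\in\Omega}\sigma(\omega)|\omega\rangle\langle\omega|$ be unequal commuting density operators, diagonal in a common orthonormal basis $(|\omega\rangle)_{\omega\in\Omega}$ of a finite-dimensional Hilbert space. Assume there is a subset $\Omega_0\subseteq\Omega$, with $\Omega_1:=\Omega\setminus\Omega_0$, such that $\sigma(\Omega_0)\varrho(\omega)=\varrho(\Omega_0)\sigma(\omega)$ for $\omega\in\Omega_0$ and $\sigma(\Omega_1)\varrho(\omega)=\varrho(\Omega_1)\sigma(\omega)$ for $\omega\in\Omega_1$, and $\varrho(\Omega_k)\neq0$, $\sigma(\Omega_k)\ne0$ for $k=0,1$. Then \[ \overline{D}_\alpha^{\mathrm{test}}(\varrho\|\sigma)<\hat D_\alpha^{\mathrm{test}}(\varrho\|\sigma)=D_\alpha(\varrho\|\sigma),\qquad \alpha\in(0,1). \] In particular, this holds for any two unequal commuting qubit states with full support.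
   Context: $\varrho(\Omega_0):=\sum_{\omega\in\Omega_0}\varrho(\omega)$, etc. For probability vectors $p,q$ and $\alpha\in(0,1)$, $D_\alpha(p\|q)=\frac{1}{\alpha-1}\log\sum_\omega p(\omega)^\alpha q(\omega)^{1-\alpha}$; for commuting states $D_\alpha(\varrho\|\sigma)$ is the classical divergence of the eigenvalue vectors. A test is an operator $0\le T\le I$; $\mathcal T(X):=(\operatorname{Tr}XT,\operatorname{Tr}X(I-T))$. $D_\alpha^{\mathrm{test}}(\varrho\|\sigma):=\max_{0\le T\le I}D_\alpha(\mathcal T(\varrho)\|\mathcal T(\sigma))$, $\overline{D}_\alpha^{\mathrm{test}}(\varrho\|\sigma):=\limsup_{n\to\infty}\frac1n D_\alpha^{\mathrm{test}}(\varrho^{\otimes n}\|\sigma^{\otimes n})$, and $\hat D_\alpha^{\mathrm{test}}(\varrho\|\sigma):=\sup_{n\in\mathbb N}\frac1n D_\alpha^{\mathrm{test}}(\varrho^{\otimes n}\|\sigma^{\otimes n})$. *)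

theory Defs
  imports "HOL-Analysis.Analysis" "HOL-Library.Liminf_Limsup"
begin

text \<open>Operators on the finite-dimensional Hilbert space with orthonormal basis indexed by a
finite carrier set I are represented by their matrices  'i => 'i => complex.\<close>

definition quad_form :: "'i set \<Rightarrow> ('i \<Rightarrow> 'i \<Rightarrow> complex) \<Rightarrow> ('i \<Rightarrow> complex) \<Rightarrow> complex" where
  "quad_form I A v = (\<Sum>i\<in>I. \<Sum>j\<in>I. cnj (v i) * A i j * v j)"

text \<open>A test: an operator 0 <= T <= I (Loewner order, via the quadratic form).\<close>
definition is_test :: "'i set \<Rightarrow> ('i \<Rightarrow> 'i \<Rightarrow> complex) \<Rightarrow> bool" where
  "is_test I T \<longleftrightarrow> (\<forall>v. quad_form I T v \<in> \<real> \<and> 0 \<le> Re (quad_form I T v)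
        \<and> Re (quad_form I T v) \<le> (\<Sum>i\<in>I. (cmod (v i))\<^sup>2))"

definition trace_prod :: "'i set \<Rightarrow> ('i \<Rightarrow> 'i \<Rightarrow> complex) \<Rightarrow> ('i \<Rightarrow> 'i \<Rightarrow> complex) \<Rightarrow> complex" where
  "trace_prod I X T = (\<Sum>i\<in>I. \<Sum>j\<in>I. X i j * T j i)"

definition id_op :: "'i \<Rightarrow> 'i \<Rightarrow> complex" where
  "id_op i j = (if i = j then 1 else 0)"

definition test_meas :: "'i set \<Rightarrow> ('i \<Rightarrow> 'i \<Rightarrow> complex) \<Rightarrow> ('i \<Rightarrow> 'i \<Rightarrow> complex) \<Rightarrow> real \<times> real" where
  "test_meas I T X = (Re (trace_prod I X T), Re (trace_prod I X (\<lambda>i j. id_op i j - T i j)))"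

definition renyi :: "'w set \<Rightarrow> real \<Rightarrow> ('w \<Rightarrow> real) \<Rightarrow> ('w \<Rightarrow> real) \<Rightarrow> real" where
  "renyi W \<alpha> p q = 1 / (\<alpha> - 1) * ln (\<Sum>w\<in>W. p w powr \<alpha> * q w powr (1 - \<alpha>))"

definition renyi_pair :: "real \<Rightarrow> real \<times> real \<Rightarrow> real \<times> real \<Rightarrow> real" where
  "renyi_pair \<alpha> p q = renyi (UNIV :: bool set) \<alpha>
      (\<lambda>b. if b then fst p else snd p) (\<lambda>b. if b then fst q else snd q)"

definition D_test :: "'i set \<Rightarrow> real \<Rightarrow> ('i \<Rightarrow> 'i \<Rightarrow> complex) \<Rightarrow> ('i \<Rightarrow> 'i \<Rightarrow> complex) \<Rightarrow> real" where
  "D_test I \<alpha> X Y = (SUP T\<in>{T. is_test I T}. renyi_pair \<alpha> (test_meas I T X) (test_meas I T Y))"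

text \<open>Diagonal operator with given diagonal, and the n-fold tensor power of an operator on
the space with basis indexed by the type 'a (basis of the tensor power: lists of length n).\<close>
definition diag_op :: "('a \<Rightarrow> real) \<Rightarrow> 'a \<Rightarrow> 'a \<Rightarrow> complex" where
  "diag_op p i j = (if i = j then complex_of_real (p i) else 0)"

definition tensor_pow :: "('a \<Rightarrow> 'a \<Rightarrow> complex) \<Rightarrow> nat \<Rightarrow> 'a list \<Rightarrow> 'a list \<Rightarrow> complex" where
  "tensor_pow A n xs ys = (\<Prod>i<n. A (xs ! i) (ys ! i))"

definition words :: "nat \<Rightarrow> 'a list set" where
  "words n = {xs. length xs = n}"

definition D_test_n :: "real \<Rightarrow> ('a \<Rightarrow> real) \<Rightarrow> ('a \<Rightarrow> real) \<Rightarrow> nat \<Rightarrow> real" where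
  "D_test_n \<alpha> p q n = D_test (words n) \<alpha> (tensor_pow (diag_op p) n) (tensor_pow (diag_op q) n)"

definition prob_vec :: "('a::finite \<Rightarrow> real) \<Rightarrow> bool" where
  "prob_vec p \<longleftrightarrow> (\<forall>w. 0 \<le> p w) \<and> (\<Sum>w\<in>UNIV. p w) = 1"

end

theory Submission
  imports Defs
begin

definition pw :: "('a \<Rightarrow> real) \<Rightarrow> 'a list \<Rightarrow> real" where
  "pw f xs = prod_list (map f xs)"

definition cnt :: "'a set \<Rightarrow> 'a list \<Rightarrow> nat" where
  "cnt A xs = length (filter (\<lambda>x. x \<in> A) xs)"

definition nu :: "('a \<Rightarrow> real) \<Rightarrow> 'a set \<Rightarrow> real \<Rightarrow> 'a \<Rightarrow> real" where
  "nu c A t x = c x * (if x \<in> A then t else 1 - t)"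

lemma pw_Nil[simp]: "pw f [] = 1" by (simp add: pw_def)
lemma pw_Cons[simp]: "pw f (x#xs) = f x * pw f xs" by (simp add: pw_def)
lemma cnt_Nil[simp]: "cnt A [] = 0" by (simp add: cnt_def)
lemma cnt_Cons[simp]: "cnt A (x#xs) = (if x \<in> A then Suc (cnt A xs) else cnt A xs)" by (simp add: cnt_def)
lemma cnt_le: "cnt A xs \<le> length xs" by (simp add: cnt_def)

lemma pw_nonneg: "(\<And>x. 0 \<le> f x) \<Longrightarrow> 0 \<le> pw f xs"
  by (induction xs) auto

lemma pw_nu: "pw (nu c A t) xs = pw c xs * t ^ cnt A xs * (1 - t) ^ (length xs - cnt A xs)"
proof (induction xs)
  case (Cons x xs)
  have "cnt A xs \<le> length xs" by (rule cnt_le)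
  then show ?case using Cons by (auto simp: nu_def Suc_diff_le)
qed simp

lemma words_finite: "finite (words n :: ('a::finite) list set)"
proof -
  have "words n = {xs. set xs \<subseteq> (UNIV::'a set) \<and> length xs = n}" by (auto simp: words_def)
  then show ?thesis using finite_lists_length_eq[of "UNIV::'a set" n] by simp
qed

lemma words_0: "words 0 = {[]}" by (auto simp: words_def)

lemma words_Suc: "words (Suc n) = (\<lambda>(x,xs). x#xs) ` (UNIV \<times> words n)"
  by (auto simp: words_def length_Suc_conv image_iff)

lemma sum_words_Suc:
  fixes f :: "('a::finite) list \<Rightarrow> 'b::comm_monoid_add"
  shows "sum f (words (Suc n)) = (\<Sum>x\<in>UNIV. \<Sum>xs\<in>words n. f (x#xs))"
proof -
  have inj: "inj_on (\<lambda>(x,xs). x#xs) (UNIV \<times> words n)" by (auto simp: inj_on_def)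
  have "sum f (words (Suc n)) = sum (f \<circ> (\<lambda>(x,xs). x#xs)) (UNIV \<times> words n)"
    unfolding words_Suc by (rule sum.reindex[OF inj])
  also have "\<dots> = (\<Sum>(x,xs)\<in>UNIV \<times> words n. f (x#xs))"
    by (rule sum.cong) auto
  also have "\<dots> = (\<Sum>x\<in>UNIV. \<Sum>xs\<in>words n. f (x#xs))"
    by (rule sum.cartesian_product[symmetric])
  finally show ?thesis .
qed

lemma words_length: "xs \<in> words n \<Longrightarrow> length xs = n" by (simp add: words_def)

lemma moments:
  fixes \<nu> :: "('a::finite) \<Rightarrow> real"
  assumes nn: "\<And>x. 0 \<le> \<nu> x" and s1: "sum \<nu> UNIV = 1" and sA: "sum \<nu> A = t"
  shows "(\<Sum>xs\<in>words n. pw \<nu> xs) = 1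
       \<and> (\<Sum>xs\<in>words n. pw \<nu> xs * (real (cnt A xs) - real n * t)) = 0
       \<and> (\<Sum>xs\<in>words n. pw \<nu> xs * (real (cnt A xs) - real n * t)^2) = real n * (t * (1 - t))"
proof (induction n)
  case 0
  then show ?case by (simp add: words_0)
next
  case (Suc n)
  define ind where "ind x = (if x \<in> A then 1 else 0::real)" for x
  define d where "d xs = real (cnt A xs) - real n * t" for xs
  have dc: "real (cnt A (x#xs)) - real (Suc n) * t = (ind x - t) + d xs" for x xs
    by (simp add: ind_def d_def algebra_simps)
  have sc: "sum \<nu> (-A) = 1 - t"
    using s1 sA sum.subset_diff[of A UNIV \<nu>] by (simp add: Compl_eq_Diff_UNIV)
  have e1: "(\<Sum>x\<in>UNIV. \<nu> x * (ind x - t)) = 0"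
  proof -
    have "(\<Sum>x\<in>UNIV. \<nu> x * (ind x - t)) = (\<Sum>x\<in>UNIV. \<nu> x * ind x) - t * sum \<nu> UNIV"
      by (simp add: algebra_simps sum_subtractf sum_distrib_left)
    also have "(\<Sum>x\<in>UNIV. \<nu> x * ind x) = sum \<nu> A"
      by (simp add: ind_def sum.If_cases Int_absorb1 flip: sum.inter_filter) (simp add: if_distrib sum.If_cases)
    finally show ?thesis using s1 sA by simp
  qed
  have e2: "(\<Sum>x\<in>UNIV. \<nu> x * (ind x - t)^2) = t * (1 - t)"
  proof -
    have "(\<Sum>x\<in>UNIV. \<nu> x * (ind x - t)^2) = (\<Sum>x\<in>A. \<nu> x * (1 - t)^2) + (\<Sum>x\<in>-A. \<nu> x * t^2)"
    proof -
      have "(\<Sum>x\<in>UNIV. \<nu> x * (ind x - t)^2) = (\<Sum>x\<in>UNIV. if x \<in> A then \<nu> x * (1 - t)^2 else \<nu> x * t^2)"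
        by (rule sum.cong) (auto simp: ind_def power2_eq_square)
      also have "\<dots> = (\<Sum>x\<in>A. \<nu> x * (1 - t)^2) + (\<Sum>x\<in>-A. \<nu> x * t^2)"
        by (simp add: sum.If_cases Compl_eq)
      finally show ?thesis .
    qed
    also have "\<dots> = t * (1-t)^2 + (1 - t) * t^2"
      by (simp add: sum_distrib_right[symmetric] sA sc)
    finally show ?thesis by (simp add: power2_eq_square algebra_simps)
  qed
  have IH0: "(\<Sum>xs\<in>words n. pw \<nu> xs) = 1" and IH1: "(\<Sum>xs\<in>words n. pw \<nu> xs * d xs) = 0"
    and IH2: "(\<Sum>xs\<in>words n. pw \<nu> xs * (d xs)^2) = real n * (t * (1 - t))"
    using Suc unfolding d_def by auto
  have A0: "(\<Sum>xs\<in>words (Suc n). pw \<nu> xs) = 1"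
    by (simp add: sum_words_Suc sum_distrib_left[symmetric] IH0 s1)
  have A1: "(\<Sum>xs\<in>words (Suc n). pw \<nu> xs * (real (cnt A xs) - real (Suc n) * t)) = 0"
  proof -
    have "(\<Sum>xs\<in>words (Suc n). pw \<nu> xs * (real (cnt A xs) - real (Suc n) * t))
       = (\<Sum>x\<in>UNIV. \<Sum>xs\<in>words n. \<nu> x * (ind x - t) * pw \<nu> xs + \<nu> x * (pw \<nu> xs * d xs))"
      by (simp only: sum_words_Suc pw_Cons dc) (simp add: algebra_simps)
    also have "\<dots> = (\<Sum>x\<in>UNIV. \<nu> x * (ind x - t))"
      by (simp add: sum.distrib sum_distrib_left[symmetric] IH0 IH1)
    finally show ?thesis using e1 by simp
  qed
  have A2: "(\<Sum>xs\<in>words (Suc n). pw \<nu> xs * (real (cnt A xs) - real (Suc n) * t)^2) = real (Suc n) * (t * (1 - t))"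
  proof -
    have "(\<Sum>xs\<in>words (Suc n). pw \<nu> xs * (real (cnt A xs) - real (Suc n) * t)^2)
       = (\<Sum>x\<in>UNIV. \<Sum>xs\<in>words n. \<nu> x * (ind x - t)^2 * pw \<nu> xs + 2 * (\<nu> x * (ind x - t)) * (pw \<nu> xs * d xs) + \<nu> x * (pw \<nu> xs * (d xs)^2))"
      by (simp only: sum_words_Suc pw_Cons dc) (simp add: power2_eq_square algebra_simps)
    also have "\<dots> = (\<Sum>x\<in>UNIV. \<nu> x * (ind x - t)^2) + (\<Sum>x\<in>UNIV. \<nu> x) * (real n * (t * (1 - t)))"
      by (simp add: sum.distrib sum_distrib_left[symmetric] sum_distrib_right[symmetric] IH0 IH1 IH2)
    finally show ?thesis using e2 s1 by (simp add: algebra_simps)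
  qed
  show ?case using A0 A1 A2 by blast
qed


lemma chebyshev_window:
  fixes \<nu> :: "('a::finite) \<Rightarrow> real"
  assumes nn: "\<And>x. 0 \<le> \<nu> x" and s1: "sum \<nu> UNIV = 1" and sA: "sum \<nu> A = t"
    and eta: "0 < \<eta>" and n: "0 < n"
  shows "(\<Sum>xs\<in>{xs\<in>words n. \<bar>real (cnt A xs) - real n * t\<bar> \<le> \<eta> * real n}. pw \<nu> xs)
         \<ge> 1 - t * (1 - t) / (\<eta>^2 * real n)"
proof -
  define d where "d xs = real (cnt A xs) - real n * t" for xs
  define W where "W = {xs\<in>words n. \<bar>d xs\<bar> \<le> \<eta> * real n}"
  have m: "(\<Sum>xs\<in>words n. pw \<nu> xs) = 1"
     "(\<Sum>xs\<in>words n. pw \<nu> xs * (d xs)^2) = real n * (t * (1 - t))"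
    using moments[OF nn s1 sA, of n] unfolding d_def by auto
  have fin: "finite (words n :: 'a list set)" by (rule words_finite)
  have WS: "W \<subseteq> words n" by (auto simp: W_def)
  have pos: "0 < \<eta> * real n" using eta n by simp
  have "(\<Sum>xs\<in>words n - W. pw \<nu> xs) \<le> (\<Sum>xs\<in>words n - W. pw \<nu> xs * ((d xs)^2 / (\<eta> * real n)^2))"
  proof (rule sum_mono)
    fix xs assume "xs \<in> words n - W"
    then have "\<eta> * real n < \<bar>d xs\<bar>" by (auto simp: W_def)
    then have "(\<eta> * real n)^2 \<le> (d xs)^2"
      using pos by (metis abs_le_square_iff abs_of_pos less_imp_le)
    then have "1 \<le> (d xs)^2 / (\<eta> * real n)^2" using pos eta n by (simp add: le_divide_eq)
    then show "pw \<nu> xs \<le> pw \<nu> xs * ((d xs)^2 / (\<eta> * real n)^2)"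
      using pw_nonneg[of \<nu> xs, OF nn] mult_left_mono[of 1 "(d xs)^2 / (\<eta> * real n)^2" "pw \<nu> xs"] by simp
  qed
  also have "\<dots> \<le> (\<Sum>xs\<in>words n. pw \<nu> xs * ((d xs)^2 / (\<eta> * real n)^2))"
    by (rule sum_mono2[OF fin]) (auto intro!: mult_nonneg_nonneg divide_nonneg_nonneg pw_nonneg nn simp del: times_divide_eq_right)
  also have "\<dots> = (\<Sum>xs\<in>words n. pw \<nu> xs * (d xs)^2) / (\<eta> * real n)^2"
    by (simp add: sum_divide_distrib)
  also have "\<dots> = t * (1 - t) / (\<eta>^2 * real n)"
    using n eta by (simp only: m) (simp add: power2_eq_square field_simps)
  finally have out: "(\<Sum>xs\<in>words n - W. pw \<nu> xs) \<le> t * (1 - t) / (\<eta>^2 * real n)" .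
  have "(\<Sum>xs\<in>W. pw \<nu> xs) = 1 - (\<Sum>xs\<in>words n - W. pw \<nu> xs)"
    using sum.subset_diff[OF WS fin, of "pw \<nu>"] m(1) by simp
  then show ?thesis using out unfolding W_def d_def by simp
qed

lemma exp_convex_ineq:
  fixes a X Y :: real
  assumes "0 \<le> a" "a \<le> 1"
  shows "exp (a * X + (1 - a) * Y) \<le> a * exp X + (1 - a) * exp Y"
  using convex_onD[OF exp_convex, of "1 - a" X Y] assms by (simp add: algebra_simps)

lemma holder_exp:
  fixes S :: "'b set" and v L :: "'b \<Rightarrow> real" and \<alpha> :: real
  assumes fin: "finite S" and v: "\<And>s. s \<in> S \<Longrightarrow> 0 \<le> v s" and al: "0 < \<alpha>" "\<alpha> < 1"
  shows "(\<Sum>s\<in>S. v s * exp ((1 - \<alpha>) * L s)) powr \<alpha> * (\<Sum>s\<in>S. v s * exp (- \<alpha> * L s)) powr (1 - \<alpha>)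
          \<ge> (\<Sum>s\<in>S. v s)"
proof (cases "\<exists>s\<in>S. 0 < v s")
  case False
  have "\<forall>s\<in>S. v s = 0"
  proof
    fix s assume "s \<in> S"
    then have "\<not> 0 < v s" "0 \<le> v s" using False v[of s] by auto
    then show "v s = 0" by linarith
  qed
  then have "(\<Sum>s\<in>S. v s) = 0" by simp
  then show ?thesis by simp
next
  case True
  then obtain s0 where s0: "s0 \<in> S" "0 < v s0" by blast
  define S1 where "S1 = (\<Sum>s\<in>S. v s * exp ((1 - \<alpha>) * L s))"
  define S2 where "S2 = (\<Sum>s\<in>S. v s * exp (- \<alpha> * L s))"
  have S1p: "0 < S1" unfolding S1_def
    using s0 by (intro sum_pos2[OF fin s0(1)]) (auto intro!: mult_nonneg_nonneg v)
  have S2p: "0 < S2" unfolding S2_def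
    using s0 by (intro sum_pos2[OF fin s0(1)]) (auto intro!: mult_nonneg_nonneg v)
  define E where "E = exp (\<alpha> * ln S1 + (1 - \<alpha>) * ln S2)"
  have "(\<Sum>s\<in>S. v s) = (\<Sum>s\<in>S. v s * exp (\<alpha> * ((1 - \<alpha>) * L s - ln S1) + (1 - \<alpha>) * (- \<alpha> * L s - ln S2)) * E)"
  proof (rule sum.cong[OF refl])
    fix s
    have "\<alpha> * ((1 - \<alpha>) * L s - ln S1) + (1 - \<alpha>) * (- \<alpha> * L s - ln S2) = - (\<alpha> * ln S1 + (1 - \<alpha>) * ln S2)"
      by (simp add: algebra_simps)
    then show "v s = v s * exp (\<alpha> * ((1 - \<alpha>) * L s - ln S1) + (1 - \<alpha>) * (- \<alpha> * L s - ln S2)) * E"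
      by (simp add: E_def exp_add[symmetric])
  qed
  also have "\<dots> \<le> (\<Sum>s\<in>S. v s * (\<alpha> * exp ((1 - \<alpha>) * L s - ln S1) + (1 - \<alpha>) * exp (- \<alpha> * L s - ln S2)) * E)"
    using al by (intro sum_mono mult_right_mono mult_left_mono exp_convex_ineq) (auto simp: E_def intro: v)
  also have "\<dots> = E * (\<alpha> * (S1 / S1) + (1 - \<alpha>) * (S2 / S2))"
    using S1p S2p
  proof -
    have eq: "v s * (\<alpha> * exp ((1 - \<alpha>) * L s - ln S1) + (1 - \<alpha>) * exp (- \<alpha> * L s - ln S2)) * E
       = E * \<alpha> / S1 * (v s * exp ((1 - \<alpha>) * L s)) + E * (1 - \<alpha>) / S2 * (v s * exp (- \<alpha> * L s))" for s
      using S1p S2p by (simp add: exp_diff exp_add field_simps)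
    have "(\<Sum>s\<in>S. E * \<alpha> / S1 * (v s * exp ((1 - \<alpha>) * L s)) + E * (1 - \<alpha>) / S2 * (v s * exp (- \<alpha> * L s)))
        = E * \<alpha> / S1 * S1 + E * (1 - \<alpha>) / S2 * S2"
      by (simp only: sum.distrib sum_distrib_left[symmetric] S1_def S2_def)
    then show ?thesis unfolding eq using S1p S2p by (simp add: field_simps)
  qed
  also have "\<dots> = E" using S1p S2p by simp
  also have "E = S1 powr \<alpha> * S2 powr (1 - \<alpha>)"
    using S1p S2p by (simp add: E_def powr_def exp_add)
  finally show ?thesis unfolding S1_def S2_def .
qed

lemma pair_bound:
  fixes S :: "'b set" and v Lam :: "'b \<Rightarrow> real" and \<alpha> m lh ll :: real
  assumes fin: "finite S" and HS: "H \<subseteq> S" and LS: "L \<subseteq> S"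
    and v: "\<And>s. s \<in> S \<Longrightarrow> 0 \<le> v s"
    and al: "0 < \<alpha>" "\<alpha> < 1"
    and lh: "\<And>s. s \<in> H \<Longrightarrow> lh \<le> Lam s" and ll: "\<And>s. s \<in> L \<Longrightarrow> Lam s \<le> ll"
    and mH: "m \<le> (\<Sum>s\<in>H. v s)" and mL: "m \<le> (\<Sum>s\<in>L. v s)" and m: "0 < m"
  shows "(\<Sum>s\<in>S. v s * exp ((1 - \<alpha>) * Lam s)) powr \<alpha> * (\<Sum>s\<in>S. v s * exp (- \<alpha> * Lam s)) powr (1 - \<alpha>)
          \<ge> m * exp (\<alpha> * (1 - \<alpha>) * (lh - ll))"
proof -
  have X1: "exp ((1 - \<alpha>) * lh) * m \<le> (\<Sum>s\<in>S. v s * exp ((1 - \<alpha>) * Lam s))"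
  proof -
    have "exp ((1 - \<alpha>) * lh) * m \<le> exp ((1 - \<alpha>) * lh) * (\<Sum>s\<in>H. v s)" using mH by simp
    also have "\<dots> = (\<Sum>s\<in>H. v s * exp ((1 - \<alpha>) * lh))" by (simp add: sum_distrib_left mult.commute[of _ "exp _"])
    also have "\<dots> \<le> (\<Sum>s\<in>H. v s * exp ((1 - \<alpha>) * Lam s))"
      using al HS by (intro sum_mono mult_left_mono) (auto intro!: v lh)
    also have "\<dots> \<le> (\<Sum>s\<in>S. v s * exp ((1 - \<alpha>) * Lam s))"
      using HS by (intro sum_mono2[OF fin]) (auto intro!: v mult_nonneg_nonneg)
    finally show ?thesis .
  qed
  have X2: "exp (- \<alpha> * ll) * m \<le> (\<Sum>s\<in>S. v s * exp (- \<alpha> * Lam s))"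
  proof -
    have "exp (- \<alpha> * ll) * m \<le> exp (- \<alpha> * ll) * (\<Sum>s\<in>L. v s)" using mL by simp
    also have "\<dots> = (\<Sum>s\<in>L. v s * exp (- \<alpha> * ll))" by (simp add: sum_distrib_left mult.commute[of _ "exp _"])
    also have "\<dots> \<le> (\<Sum>s\<in>L. v s * exp (- \<alpha> * Lam s))"
      using al LS by (intro sum_mono mult_left_mono) (auto intro!: v ll)
    also have "\<dots> \<le> (\<Sum>s\<in>S. v s * exp (- \<alpha> * Lam s))"
      using LS by (intro sum_mono2[OF fin]) (auto intro!: v mult_nonneg_nonneg)
    finally show ?thesis .
  qed
  have "(exp ((1 - \<alpha>) * lh) * m) powr \<alpha> * (exp (- \<alpha> * ll) * m) powr (1 - \<alpha>)
      = exp (\<alpha> * ((1 - \<alpha>) * lh + ln m)) * exp ((1 - \<alpha>) * (- \<alpha> * ll + ln m))"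
    using m by (simp add: powr_def ln_mult)
  also have "\<dots> = exp (ln m + \<alpha> * (1 - \<alpha>) * (lh - ll))"
    by (simp add: exp_add[symmetric] algebra_simps)
  also have "\<dots> = m * exp (\<alpha> * (1 - \<alpha>) * (lh - ll))"
    using m by (simp add: exp_add)
  finally have "m * exp (\<alpha> * (1 - \<alpha>) * (lh - ll)) = (exp ((1 - \<alpha>) * lh) * m) powr \<alpha> * (exp (- \<alpha> * ll) * m) powr (1 - \<alpha>)"
    by simp
  also have "\<dots> \<le> (\<Sum>s\<in>S. v s * exp ((1 - \<alpha>) * Lam s)) powr \<alpha> * (\<Sum>s\<in>S. v s * exp (- \<alpha> * Lam s)) powr (1 - \<alpha>)"
    using m al X1 X2 by (intro mult_mono powr_mono2) auto
  finally show ?thesis .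
qed


definition win :: "'a set \<Rightarrow> nat \<Rightarrow> real \<Rightarrow> real \<Rightarrow> 'a list set" where
  "win A n t \<eta> = {xs\<in>words n. \<bar>real (cnt A xs) - real n * t\<bar> \<le> \<eta> * real n}"

lemma kl_bound:
  fixes p t :: real
  assumes p: "0 < p" "p < 1" and t: "0 < t" "t < 1"
  shows "- (t * ln (p / t) + (1 - t) * ln ((1 - p) / (1 - t))) \<le> (t - p)^2 / (p * (1 - p))"
proof -
  have 1: "t * ln (t / p) \<le> t * (t / p - 1)"
    using p t by (intro mult_left_mono ln_le_minus_one) auto
  have 2: "(1 - t) * ln ((1 - t) / (1 - p)) \<le> (1 - t) * ((1 - t) / (1 - p) - 1)"
    using p t by (intro mult_left_mono ln_le_minus_one) auto
  have e1: "ln (p / t) = - ln (t / p)" using p t by (simp add: ln_div)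
  have e2: "ln ((1 - p) / (1 - t)) = - ln ((1 - t) / (1 - p))" using p t by (simp add: ln_div)
  have "t * (t / p - 1) + (1 - t) * ((1 - t) / (1 - p) - 1) = (t - p)^2 / (p * (1 - p))"
    using p t by (simp add: field_simps power2_eq_square)
  then show ?thesis using 1 2 unfolding e1 e2 by linarith
qed

context
  fixes c :: "'a::finite \<Rightarrow> real" and A :: "'a set" and a b \<alpha> :: real
  assumes c_nn: "\<And>x. 0 \<le> c x" and cA: "sum c A = 1" and cB: "sum c (-A) = 1"
    and a: "0 < a" "a < 1" and b: "0 < b" "b < 1" and ab: "a \<noteq> b" and al: "0 < \<alpha>" "\<alpha> < 1"
begin

definition "x0 = exp (\<alpha> * ln a + (1 - \<alpha>) * ln b)"
definition "y0 = exp (\<alpha> * ln (1 - a) + (1 - \<alpha>) * ln (1 - b))"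
definition "ZZ = x0 + y0"
definition "pp = x0 / ZZ"
definition "l0 = ln a - ln b"
definition "l1 = ln (1 - a) - ln (1 - b)"
definition "Lam xs = real (cnt A xs) * l0 + real (length xs - cnt A xs) * l1"
definition "ww xs = pw (nu c A pp) xs * ZZ ^ length xs"

lemma x0_pos: "0 < x0" and y0_pos: "0 < y0" and ZZ_pos: "0 < ZZ"
  by (auto simp: x0_def y0_def ZZ_def add_pos_pos)

lemma pp_bounds: "0 < pp" "pp < 1"
  using x0_pos y0_pos by (auto simp: pp_def ZZ_def)

lemma nu_facts:
  assumes "0 \<le> t" "t \<le> 1"
  shows "\<And>x. 0 \<le> nu c A t x" "sum (nu c A t) UNIV = 1" "sum (nu c A t) A = t"
proof -
  show "0 \<le> nu c A t x" for x using assms c_nn[of x] by (auto simp: nu_def)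
  have sA: "sum (nu c A t) A = t" using cA by (simp add: nu_def sum_distrib_right[symmetric])
  have sB: "sum (nu c A t) (-A) = 1 - t" using cB by (simp add: nu_def sum_distrib_right[symmetric])
  have "sum (nu c A t) UNIV = sum (nu c A t) (A \<union> -A)" by simp
  also have "\<dots> = sum (nu c A t) A + sum (nu c A t) (-A)"
    by (rule sum.union_disjoint) auto
  finally have "sum (nu c A t) UNIV = sum (nu c A t) A + sum (nu c A t) (-A)" .
  then show "sum (nu c A t) UNIV = 1" using sA sB by simp
  show "sum (nu c A t) A = t" by (rule sA)
qed

lemma ww_nonneg: "0 \<le> ww xs"
  unfolding ww_def using pp_bounds ZZ_pos
  by (intro mult_nonneg_nonneg pw_nonneg) (auto intro: nu_facts(1))

lemma ww_alt: "ww xs = pw c xs * x0 ^ cnt A xs * y0 ^ (length xs - cnt A xs)"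
proof -
  have k: "cnt A xs \<le> length xs" by (rule cnt_le)
  have "ZZ ^ length xs = ZZ ^ cnt A xs * ZZ ^ (length xs - cnt A xs)"
    using k by (simp add: power_add[symmetric])
  moreover have "pp * ZZ = x0" "(1 - pp) * ZZ = y0" using ZZ_pos by (auto simp: pp_def ZZ_def field_simps)
  ultimately show ?thesis
    by (simp add: ww_def pw_nu power_mult_distrib[symmetric] mult_ac)
qed

lemma exp_pow: "exp (real k * x) = exp x ^ k"
  by (simp add: exp_of_nat_mult)

lemma exp_pow2: "exp (x * real k) = exp x ^ k"
  using exp_pow[of k x] by (simp add: mult.commute)

lemma P_rep: "pw (nu c A a) xs = ww xs * exp ((1 - \<alpha>) * Lam xs)"
proof -
  have ea: "a = x0 * exp ((1 - \<alpha>) * l0)"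
    using a by (simp add: x0_def l0_def exp_add[symmetric] algebra_simps)
  have eb: "1 - a = y0 * exp ((1 - \<alpha>) * l1)"
    using a by (simp add: y0_def l1_def exp_add[symmetric] algebra_simps)
  define k where "k = cnt A xs"
  define m where "m = length xs - cnt A xs"
  have "exp ((1 - \<alpha>) * Lam xs) = exp ((1 - \<alpha>) * l0) ^ k * exp ((1 - \<alpha>) * l1) ^ m"
    by (simp add: Lam_def k_def m_def exp_pow[symmetric] exp_add[symmetric] algebra_simps)
  then show ?thesis
    unfolding ww_alt pw_nu m_def[symmetric] k_def[symmetric]
    by (subst ea, subst eb) (simp add: power_mult_distrib mult_ac k_def m_def)
qed

lemma Q_rep: "pw (nu c A b) xs = ww xs * exp (- \<alpha> * Lam xs)"
proof -
  have ea: "b = x0 * exp (- \<alpha> * l0)"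
    using b by (simp add: x0_def l0_def exp_add[symmetric] algebra_simps)
  have eb: "1 - b = y0 * exp (- \<alpha> * l1)"
    using b by (simp add: y0_def l1_def exp_add[symmetric] algebra_simps)
  define k where "k = cnt A xs"
  define m where "m = length xs - cnt A xs"
  have "exp (- \<alpha> * Lam xs) = exp (- \<alpha> * l0) ^ k * exp (- \<alpha> * l1) ^ m"
    by (simp add: Lam_def k_def m_def exp_pow[symmetric] exp_add[symmetric] algebra_simps)
  then show ?thesis
    unfolding ww_alt pw_nu m_def[symmetric] k_def[symmetric]
    by (subst ea, subst eb) (simp add: power_mult_distrib mult_ac k_def m_def)
qed

lemma sum_ww: "(\<Sum>xs\<in>words n. ww xs) = ZZ ^ n"
proof -
  have "(\<Sum>xs\<in>words n. ww xs) = (\<Sum>xs\<in>words n. pw (nu c A pp) xs) * ZZ ^ n"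
    by (simp add: ww_def sum_distrib_right words_length cong: sum.cong)
  also have "(\<Sum>xs\<in>words n. pw (nu c A pp) xs) = 1"
    using moments[OF nu_facts[OF _ _]] pp_bounds by auto
  finally show ?thesis by simp
qed


definition "FF n u =
   (\<Sum>xs\<in>words n. u xs * pw (nu c A a) xs) powr \<alpha> * (\<Sum>xs\<in>words n. u xs * pw (nu c A b) xs) powr (1 - \<alpha>)
 + (\<Sum>xs\<in>words n. (1 - u xs) * pw (nu c A a) xs) powr \<alpha> * (\<Sum>xs\<in>words n. (1 - u xs) * pw (nu c A b) xs) powr (1 - \<alpha>)"

lemma sums_rep:
  "(\<Sum>xs\<in>words n. v xs * pw (nu c A a) xs) = (\<Sum>xs\<in>words n. (v xs * ww xs) * exp ((1 - \<alpha>) * Lam xs))"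
  "(\<Sum>xs\<in>words n. v xs * pw (nu c A b) xs) = (\<Sum>xs\<in>words n. (v xs * ww xs) * exp (- \<alpha> * Lam xs))"
  by (simp_all add: P_rep Q_rep mult_ac)

lemma half_bound:
  assumes v: "\<And>xs. xs \<in> words n \<Longrightarrow> 0 \<le> v xs"
  shows "(\<Sum>xs\<in>words n. v xs * ww xs) \<le>
    (\<Sum>xs\<in>words n. v xs * pw (nu c A a) xs) powr \<alpha> * (\<Sum>xs\<in>words n. v xs * pw (nu c A b) xs) powr (1 - \<alpha>)"
  unfolding sums_rep
  by (rule holder_exp[OF words_finite _ al]) (auto intro!: mult_nonneg_nonneg v ww_nonneg)

lemma claim1:
  assumes u: "\<And>xs. xs \<in> words n \<Longrightarrow> 0 \<le> u xs \<and> u xs \<le> 1"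
  shows "ZZ ^ n \<le> FF n u"
proof -
  have "ZZ ^ n = (\<Sum>xs\<in>words n. u xs * ww xs) + (\<Sum>xs\<in>words n. (1 - u xs) * ww xs)"
    by (simp add: sum_ww[symmetric] sum.distrib[symmetric] algebra_simps)
  also have "\<dots> \<le> FF n u" unfolding FF_def
    by (intro add_mono half_bound) (auto dest: u)
  finally show ?thesis .
qed

lemma FF_ge:
  assumes u: "\<And>xs. xs \<in> words n \<Longrightarrow> 0 \<le> u xs \<and> u xs \<le> 1"
  shows "(\<Sum>xs\<in>words n. u xs * pw (nu c A a) xs) powr \<alpha> * (\<Sum>xs\<in>words n. u xs * pw (nu c A b) xs) powr (1 - \<alpha>) \<le> FF n u"
    and "(\<Sum>xs\<in>words n. (1 - u xs) * pw (nu c A a) xs) powr \<alpha> * (\<Sum>xs\<in>words n. (1 - u xs) * pw (nu c A b) xs) powr (1 - \<alpha>) \<le> FF n u"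
  unfolding FF_def by (auto intro!: add_increasing add_increasing2)

lemma mass:
  assumes t: "0 < t" "t < 1" and eta: "0 < \<eta>" and n: "0 < n" and nbig: "1 / (2 * \<eta>^2) \<le> real n"
  shows "ZZ ^ n * exp (- real n * (- (t * ln (pp / t) + (1 - t) * ln ((1 - pp) / (1 - t)))
            + \<eta> * \<bar>ln (pp / t) - ln ((1 - pp) / (1 - t))\<bar>)) / 2
         \<le> (\<Sum>xs\<in>win A n t \<eta>. ww xs)"
proof -
  define Aa where "Aa = ln (pp / t)"
  define Bb where "Bb = ln ((1 - pp) / (1 - t))"
  define los where "los = - (t * Aa + (1 - t) * Bb) + \<eta> * \<bar>Aa - Bb\<bar>"
  have fin: "finite (win A n t \<eta>)" using words_finite[of n] by (auto simp: win_def)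
  have ppA: "pp = t * exp Aa" using pp_bounds t by (simp add: Aa_def)
  have ppB: "1 - pp = (1 - t) * exp Bb" using pp_bounds t by (simp add: Bb_def)
  have pt: "ww xs \<ge> ZZ ^ n * exp (- real n * los) * pw (nu c A t) xs" if xs: "xs \<in> win A n t \<eta>" for xs
  proof -
    define k where "k = cnt A xs"
    have len: "length xs = n" using xs by (auto simp: win_def words_def)
    have kn: "k \<le> n" using cnt_le[of A xs] len by (simp add: k_def)
    have kw: "\<bar>real k - real n * t\<bar> \<le> \<eta> * real n" using xs by (simp add: win_def k_def)
    have "ww xs = ZZ ^ n * (pw (nu c A t) xs * exp (real k * Aa + real (n - k) * Bb))"
      unfolding ww_def pw_nu len k_def[symmetric]
      by (subst ppA, subst ppB) (simp add: exp_add exp_pow exp_pow2 power_mult_distrib mult_ac)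
    moreover have "- real n * los \<le> real k * Aa + real (n - k) * Bb"
    proof -
      have e: "real k * Aa + real (n - k) * Bb = real n * (t * Aa + (1 - t) * Bb) + (real k - real n * t) * (Aa - Bb)"
        using kn by (simp add: of_nat_diff algebra_simps)
      have "- (\<eta> * real n * \<bar>Aa - Bb\<bar>) \<le> (real k - real n * t) * (Aa - Bb)"
      proof -
        have "\<bar>(real k - real n * t) * (Aa - Bb)\<bar> \<le> \<eta> * real n * \<bar>Aa - Bb\<bar>"
          unfolding abs_mult by (rule mult_right_mono[OF kw]) simp
        then show ?thesis by linarith
      qed
      then show ?thesis unfolding e los_def by (simp add: algebra_simps)
    qed
    then have e: "exp (- real n * los) \<le> exp (real k * Aa + real (n - k) * Bb)" by simp
    have "0 \<le> pw (nu c A t) xs" by (rule pw_nonneg) (use nu_facts(1) t in auto)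
    then have "ZZ ^ n * exp (- real n * los) * pw (nu c A t) xs \<le> ZZ ^ n * exp (real k * Aa + real (n - k) * Bb) * pw (nu c A t) xs"
      using e ZZ_pos by (intro mult_right_mono mult_left_mono) auto
    then have "ZZ ^ n * exp (- real n * los) * pw (nu c A t) xs \<le> ZZ ^ n * (pw (nu c A t) xs * exp (real k * Aa + real (n - k) * Bb))"
      by (simp add: mult_ac)
    ultimately show ?thesis by simp
  qed
  have cheb: "1 / 2 \<le> (\<Sum>xs\<in>win A n t \<eta>. pw (nu c A t) xs)"
  proof -
    have c: "(\<Sum>xs\<in>win A n t \<eta>. pw (nu c A t) xs) \<ge> 1 - t * (1 - t) / (\<eta>^2 * real n)"
      using chebyshev_window[OF nu_facts[of t] eta n] t unfolding win_def by auto
    have "0 \<le> (2 * t - 1) * (2 * t - 1)" by simp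
    then have "t * (1 - t) \<le> 1 / 4" by (simp add: algebra_simps)
    moreover have "1 / 2 \<le> \<eta>^2 * real n" using nbig eta by (simp add: field_simps)
    ultimately have "t * (1 - t) / (\<eta>^2 * real n) \<le> 1 / 2"
      using eta n by (simp add: divide_le_eq)
    then show ?thesis using c by linarith
  qed
  have "ZZ ^ n * exp (- real n * los) / 2 \<le> ZZ ^ n * exp (- real n * los) * (\<Sum>xs\<in>win A n t \<eta>. pw (nu c A t) xs)"
    using cheb ZZ_pos by simp
  also have "\<dots> = (\<Sum>xs\<in>win A n t \<eta>. ZZ ^ n * exp (- real n * los) * pw (nu c A t) xs)"
    by (simp add: sum_distrib_left)
  also have "\<dots> \<le> (\<Sum>xs\<in>win A n t \<eta>. ww xs)"
    by (rule sum_mono) (rule pt)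
  finally show ?thesis unfolding los_def Aa_def Bb_def .
qed

lemma Lam_eq: "xs \<in> words n \<Longrightarrow> Lam xs = real n * l1 + real (cnt A xs) * (l0 - l1)"
  using cnt_le[of A xs] by (simp add: Lam_def words_def of_nat_diff algebra_simps)

lemma pairwin:
  assumes tt: "t + \<delta> \<le> t'" and eta: "0 < \<eta>" "\<eta> \<le> \<delta> / 4"
    and v: "\<And>xs. xs \<in> words n \<Longrightarrow> 0 \<le> v xs" and m: "0 < m"
    and m1: "m \<le> (\<Sum>xs\<in>win A n t \<eta>. v xs * ww xs)" and m2: "m \<le> (\<Sum>xs\<in>win A n t' \<eta>. v xs * ww xs)"
  shows "m * exp (\<alpha> * (1 - \<alpha>) * (real n * \<bar>l0 - l1\<bar> * \<delta> / 2)) \<le>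
    (\<Sum>xs\<in>words n. v xs * pw (nu c A a) xs) powr \<alpha> * (\<Sum>xs\<in>words n. v xs * pw (nu c A b) xs) powr (1 - \<alpha>)"
proof -
  define d where "d = l0 - l1"
  have sub: "win A n t \<eta> \<subseteq> words n" "win A n t' \<eta> \<subseteq> words n" by (auto simp: win_def)
  have vw: "\<And>xs. xs \<in> words n \<Longrightarrow> 0 \<le> v xs * ww xs" by (auto intro!: mult_nonneg_nonneg v ww_nonneg)
  have up: "real (cnt A xs) \<le> real n * t + \<eta> * real n" if "xs \<in> win A n t \<eta>" for xs
    using that by (auto simp: win_def)
  have lo: "real n * t' - \<eta> * real n \<le> real (cnt A xs)" if "xs \<in> win A n t' \<eta>" for xs
    using that by (auto simp: win_def)
  have gap: "real n * \<delta> / 2 \<le> (real n * t' - \<eta> * real n) - (real n * t + \<eta> * real n)"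
  proof -
    have "real n * (\<delta> / 2) \<le> real n * (t' - t - 2 * \<eta>)" using tt eta by (intro mult_left_mono) auto
    then show ?thesis by (simp add: algebra_simps)
  qed
  have main: "m * exp (\<alpha> * (1 - \<alpha>) * (lh - ll)) \<le>
    (\<Sum>xs\<in>words n. v xs * pw (nu c A a) xs) powr \<alpha> * (\<Sum>xs\<in>words n. v xs * pw (nu c A b) xs) powr (1 - \<alpha>)"
    if "H \<subseteq> words n" "L \<subseteq> words n" "\<And>xs. xs \<in> H \<Longrightarrow> lh \<le> Lam xs" "\<And>xs. xs \<in> L \<Longrightarrow> Lam xs \<le> ll"
       "m \<le> (\<Sum>xs\<in>H. v xs * ww xs)" "m \<le> (\<Sum>xs\<in>L. v xs * ww xs)" for H L lh ll
    unfolding sums_rep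
    by (rule pair_bound[OF words_finite that(1,2) vw al that(3,4) that(5,6) m])
  have "m * exp (\<alpha> * (1 - \<alpha>) * (real n * \<bar>d\<bar> * \<delta> / 2)) \<le>
    (\<Sum>xs\<in>words n. v xs * pw (nu c A a) xs) powr \<alpha> * (\<Sum>xs\<in>words n. v xs * pw (nu c A b) xs) powr (1 - \<alpha>)"
    (is "_ \<le> ?R")
  proof (cases "0 \<le> d")
    case True
    define lh where "lh = real n * l1 + (real n * t' - \<eta> * real n) * d"
    define ll where "ll = real n * l1 + (real n * t + \<eta> * real n) * d"
    have "real n * \<bar>d\<bar> * \<delta> / 2 \<le> lh - ll"
    proof -
      have "(real n * \<delta> / 2) * d \<le> ((real n * t' - \<eta> * real n) - (real n * t + \<eta> * real n)) * d"
        using gap True by (rule mult_right_mono)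
      then show ?thesis using True by (simp add: lh_def ll_def algebra_simps)
    qed
    then have "m * exp (\<alpha> * (1 - \<alpha>) * (real n * \<bar>d\<bar> * \<delta> / 2)) \<le> m * exp (\<alpha> * (1 - \<alpha>) * (lh - ll))"
      using m al by (intro mult_left_mono) (auto intro!: mult_left_mono mult_nonneg_nonneg)
    also have "\<dots> \<le> ?R"
    proof (rule main[OF sub(2) sub(1) _ _ m2 m1])
      fix xs assume "xs \<in> win A n t' \<eta>"
      note xw = this
      then have xs: "xs \<in> words n" using sub by auto
      have "(real n * t' - \<eta> * real n) * d \<le> real (cnt A xs) * d" using lo[OF xw] True by (intro mult_right_mono) auto
      then show "lh \<le> Lam xs" unfolding Lam_eq[OF xs] lh_def d_def by simp
    next
      fix xs assume "xs \<in> win A n t \<eta>"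
      note xw = this
      then have xs: "xs \<in> words n" using sub by auto
      have "real (cnt A xs) * d \<le> (real n * t + \<eta> * real n) * d" using up[OF xw] True by (intro mult_right_mono) auto
      then show "Lam xs \<le> ll" unfolding Lam_eq[OF xs] ll_def d_def by simp
    qed
    finally show ?thesis .
  next
    case False
    define lh where "lh = real n * l1 + (real n * t + \<eta> * real n) * d"
    define ll where "ll = real n * l1 + (real n * t' - \<eta> * real n) * d"
    have "real n * \<bar>d\<bar> * \<delta> / 2 \<le> lh - ll"
    proof -
      have "(real n * \<delta> / 2) * (- d) \<le> ((real n * t' - \<eta> * real n) - (real n * t + \<eta> * real n)) * (- d)"
        using gap False by (intro mult_right_mono) auto
      then show ?thesis using False by (simp add: lh_def ll_def algebra_simps)
    qed
    then have "m * exp (\<alpha> * (1 - \<alpha>) * (real n * \<bar>d\<bar> * \<delta> / 2)) \<le> m * exp (\<alpha> * (1 - \<alpha>) * (lh - ll))"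
      using m al by (intro mult_left_mono) (auto intro!: mult_left_mono mult_nonneg_nonneg)
    also have "\<dots> \<le> ?R"
    proof (rule main[OF sub(1) sub(2) _ _ m1 m2])
      fix xs assume "xs \<in> win A n t \<eta>"
      note xw = this
      then have xs: "xs \<in> words n" using sub by auto
      have "(real n * t + \<eta> * real n) * d \<le> real (cnt A xs) * d" using up[OF xw] False by (intro mult_right_mono_neg) auto
      then show "lh \<le> Lam xs" unfolding Lam_eq[OF xs] lh_def d_def by simp
    next
      fix xs assume "xs \<in> win A n t' \<eta>"
      note xw = this
      then have xs: "xs \<in> words n" using sub by auto
      have "real (cnt A xs) * d \<le> (real n * t' - \<eta> * real n) * d" using lo[OF xw] False by (intro mult_right_mono_neg) auto
      then show "Lam xs \<le> ll" unfolding Lam_eq[OF xs] ll_def d_def by simp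
    qed
    finally show ?thesis .
  qed
  then show ?thesis by (simp add: d_def)
qed

lemma d_nonzero: "l0 - l1 \<noteq> 0"
proof (cases "a < b")
  case True
  then have "ln a < ln b" "ln (1 - b) < ln (1 - a)" using a b by auto
  then show ?thesis by (simp add: l0_def l1_def)
next
  case False
  then have "b < a" using ab by auto
  then have "ln b < ln a" "ln (1 - a) < ln (1 - b)" using a b by auto
  then show ?thesis by (simp add: l0_def l1_def)
qed

lemma claim2: "\<exists>\<kappa>>0. \<exists>N. \<forall>n\<ge>N. \<forall>u. (\<forall>xs\<in>words n. 0 \<le> u xs \<and> u xs \<le> 1) \<longrightarrow> ZZ ^ n * exp (\<kappa> * real n) \<le> FF n u"
proof -
  define d where "d = l0 - l1"
  define g where "g = \<alpha> * (1 - \<alpha>) * \<bar>d\<bar>"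
  have gpos: "0 < g" using d_nonzero al by (simp add: g_def d_def)
  have pp: "0 < pp" "pp < 1" by (rule pp_bounds)+
  define q where "q = pp * (1 - pp)"
  have qpos: "0 < q" using pp by (simp add: q_def)
  define \<delta> where "\<delta> = min (min (pp / 2) ((1 - pp) / 2)) (g * q / 8)"
  have dpos: "0 < \<delta>" using pp gpos qpos by (simp add: \<delta>_def)
  have d1: "\<delta> \<le> pp / 2" "\<delta> \<le> (1 - pp) / 2" "\<delta> \<le> g * q / 8" unfolding \<delta>_def by linarith+
  define t1 where "t1 = pp - \<delta>"
  define t3 where "t3 = pp + \<delta>"
  have t1b: "0 < t1" "t1 < 1" and t3b: "0 < t3" "t3 < 1" using d1 dpos pp by (auto simp: t1_def t3_def)
  define Af where "Af t = ln (pp / t) - ln ((1 - pp) / (1 - t))" for t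
  define KLf where "KLf t = - (t * ln (pp / t) + (1 - t) * ln ((1 - pp) / (1 - t)))" for t
  define K where "K = \<bar>Af t1\<bar> + \<bar>Af t3\<bar> + 1"
  have Kpos: "0 < K" by (simp add: K_def add_nonneg_pos)
  define \<eta> where "\<eta> = min (\<delta> / 4) (\<delta>^2 / (q * K))"
  have epos: "0 < \<eta>" using dpos qpos Kpos by (simp add: \<eta>_def)
  have e1: "\<eta> \<le> \<delta> / 4" unfolding \<eta>_def by linarith
  have eK: "\<eta> * K \<le> \<delta>^2 / q"
  proof -
    have "\<eta> \<le> \<delta>^2 / (q * K)" unfolding \<eta>_def by linarith
    then have "\<eta> * K \<le> \<delta>^2 / (q * K) * K" using Kpos by (intro mult_right_mono) auto
    then show ?thesis using Kpos by simp
  qed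
  define \<Lambda> where "\<Lambda> = 2 * \<delta>^2 / q"
  have loss: "KLf t + \<eta> * \<bar>Af t\<bar> \<le> \<Lambda>" if "t \<in> {t1, pp, t3}" for t
  proof -
    from that consider "t = pp" | "t = t1" | "t = t3" by auto
    then show ?thesis
    proof cases
      case 1
      then show ?thesis using pp dpos qpos by (simp add: KLf_def Af_def \<Lambda>_def)
    next
      case 2
      have "KLf t \<le> (t - pp)^2 / q" unfolding KLf_def q_def using kl_bound[OF pp t1b] 2 by simp
      also have "\<dots> = \<delta>^2 / q" using 2 by (simp add: t1_def power2_eq_square)
      finally have k: "KLf t \<le> \<delta>^2 / q" .
      have "\<eta> * \<bar>Af t\<bar> \<le> \<eta> * K" using epos 2 by (intro mult_left_mono) (auto simp: K_def)
      then show ?thesis using k eK by (simp add: \<Lambda>_def)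
    next
      case 3
      have "KLf t \<le> (t - pp)^2 / q" unfolding KLf_def q_def using kl_bound[OF pp t3b] 3 by simp
      also have "\<dots> = \<delta>^2 / q" using 3 by (simp add: t3_def power2_eq_square)
      finally have k: "KLf t \<le> \<delta>^2 / q" .
      have "\<eta> * \<bar>Af t\<bar> \<le> \<eta> * K" using epos 3 by (intro mult_left_mono) (auto simp: K_def)
      then show ?thesis using k eK by (simp add: \<Lambda>_def)
    qed
  qed
  have Lg: "\<Lambda> \<le> g * \<delta> / 4"
  proof -
    have "\<delta> / q \<le> g / 8" using d1(3) qpos by (simp add: divide_le_eq mult.commute)
    then have "2 * \<delta> * (\<delta> / q) \<le> 2 * \<delta> * (g / 8)" using dpos by (intro mult_left_mono) auto
    then show ?thesis by (simp add: \<Lambda>_def power2_eq_square mult.commute)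
  qed
  define \<kappa> where "\<kappa> = g * \<delta> / 8"
  have kpos: "0 < \<kappa>" using gpos dpos by (simp add: \<kappa>_def)
  define N where "N = nat \<lceil>max (1 / (2 * \<eta>^2)) (ln 4 / \<kappa>)\<rceil> + 1"
  have "ZZ ^ n * exp (\<kappa> * real n) \<le> FF n u"
    if nN: "n \<ge> N" and u: "\<forall>xs\<in>words n. 0 \<le> u xs \<and> u xs \<le> 1" for n u
  proof -
    have npos: "0 < n" using nN by (simp add: N_def)
    have nr: "max (1 / (2 * \<eta>^2)) (ln 4 / \<kappa>) \<le> real n"
    proof -
      have "max (1 / (2 * \<eta>^2)) (ln 4 / \<kappa>) \<le> real (nat \<lceil>max (1 / (2 * \<eta>^2)) (ln 4 / \<kappa>)\<rceil>)"
        by linarith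
      also have "\<dots> \<le> real n" using nN unfolding N_def of_nat_le_iff by linarith
      finally show ?thesis .
    qed
    then have nb: "1 / (2 * \<eta>^2) \<le> real n" and nk: "ln 4 / \<kappa> \<le> real n" by auto
    have ex4: "4 \<le> exp (\<kappa> * real n)"
    proof -
      have "ln 4 \<le> \<kappa> * real n" using nk kpos by (simp add: divide_le_eq mult.commute)
      then have "exp (ln 4) \<le> exp (\<kappa> * real n)" by (simp only: exp_le_cancel_iff)
      then show ?thesis by simp
    qed
    define Mlow where "Mlow = ZZ ^ n * exp (- real n * \<Lambda>) / 2"
    define m where "m = Mlow / 2"
    have mpos: "0 < m" using ZZ_pos by (simp add: m_def Mlow_def)
    have mass3: "Mlow \<le> (\<Sum>xs\<in>win A n t \<eta>. ww xs)" if tt: "t \<in> {t1, pp, t3}" for t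
    proof -
      have tb: "0 < t" "t < 1" using tt t1b t3b pp by auto
      have "exp (- real n * \<Lambda>) \<le> exp (- real n * (KLf t + \<eta> * \<bar>Af t\<bar>))"
        using loss[OF tt] by (simp add: mult_left_mono)
      then have "Mlow \<le> ZZ ^ n * exp (- real n * (KLf t + \<eta> * \<bar>Af t\<bar>)) / 2"
        unfolding Mlow_def using ZZ_pos by (simp add: divide_right_mono)
      also have "\<dots> \<le> (\<Sum>xs\<in>win A n t \<eta>. ww xs)"
        using mass[OF tb epos npos nb] by (simp add: KLf_def Af_def)
      finally show ?thesis .
    qed
    have heavy: "m \<le> (\<Sum>xs\<in>win A n t \<eta>. u xs * ww xs) \<or> m \<le> (\<Sum>xs\<in>win A n t \<eta>. (1 - u xs) * ww xs)"
      if tt: "t \<in> {t1, pp, t3}" for t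
    proof -
      have "(\<Sum>xs\<in>win A n t \<eta>. u xs * ww xs) + (\<Sum>xs\<in>win A n t \<eta>. (1 - u xs) * ww xs) = (\<Sum>xs\<in>win A n t \<eta>. ww xs)"
        by (simp add: sum.distrib[symmetric] algebra_simps)
      then show ?thesis using mass3[OF tt] unfolding m_def by linarith
    qed
    have u': "\<And>xs. xs \<in> words n \<Longrightarrow> 0 \<le> u xs \<and> u xs \<le> 1" using u by auto
    have bound: "m * exp (\<alpha> * (1 - \<alpha>) * (real n * \<bar>l0 - l1\<bar> * \<delta> / 2)) \<le> FF n u"
    proof -
      have P1: "m * exp (\<alpha> * (1 - \<alpha>) * (real n * \<bar>l0 - l1\<bar> * \<delta> / 2)) \<le> FF n u"
        if "ta + \<delta> \<le> tb" "m \<le> (\<Sum>xs\<in>win A n ta \<eta>. u xs * ww xs)" "m \<le> (\<Sum>xs\<in>win A n tb \<eta>. u xs * ww xs)" for ta tb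
      proof -
        have v: "\<And>xs. xs \<in> words n \<Longrightarrow> 0 \<le> u xs" using u' by auto
        show ?thesis
          by (rule order_trans[OF pairwin[OF that(1) epos e1 v mpos that(2,3)] FF_ge(1)[OF u']])
      qed
      have P2: "m * exp (\<alpha> * (1 - \<alpha>) * (real n * \<bar>l0 - l1\<bar> * \<delta> / 2)) \<le> FF n u"
        if "ta + \<delta> \<le> tb" "m \<le> (\<Sum>xs\<in>win A n ta \<eta>. (1 - u xs) * ww xs)" "m \<le> (\<Sum>xs\<in>win A n tb \<eta>. (1 - u xs) * ww xs)" for ta tb
      proof -
        have v: "\<And>xs. xs \<in> words n \<Longrightarrow> 0 \<le> 1 - u xs" using u' by auto
        show ?thesis
          by (rule order_trans[OF pairwin[OF that(1) epos e1 v mpos that(2,3)] FF_ge(2)[OF u']])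
      qed
      have o12: "t1 + \<delta> \<le> pp" and o23: "pp + \<delta> \<le> t3" and o13: "t1 + \<delta> \<le> t3"
        using dpos by (auto simp: t1_def t3_def)
      have h1: "m \<le> (\<Sum>xs\<in>win A n t1 \<eta>. u xs * ww xs) \<or> m \<le> (\<Sum>xs\<in>win A n t1 \<eta>. (1 - u xs) * ww xs)"
        by (rule heavy) simp
      have h2: "m \<le> (\<Sum>xs\<in>win A n pp \<eta>. u xs * ww xs) \<or> m \<le> (\<Sum>xs\<in>win A n pp \<eta>. (1 - u xs) * ww xs)"
        by (rule heavy) simp
      have h3: "m \<le> (\<Sum>xs\<in>win A n t3 \<eta>. u xs * ww xs) \<or> m \<le> (\<Sum>xs\<in>win A n t3 \<eta>. (1 - u xs) * ww xs)"
        by (rule heavy) simp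
      show ?thesis
      proof (cases "m \<le> (\<Sum>xs\<in>win A n pp \<eta>. u xs * ww xs)")
        case True
        show ?thesis
        proof (cases "m \<le> (\<Sum>xs\<in>win A n t1 \<eta>. u xs * ww xs)")
          case True2: True
          show ?thesis by (rule P1[OF o12 True2 True])
        next
          case False2: False
          show ?thesis
          proof (cases "m \<le> (\<Sum>xs\<in>win A n t3 \<eta>. u xs * ww xs)")
            case True3: True
            show ?thesis by (rule P1[OF o23 True True3])
          next
            case False3: False
            show ?thesis using h1 h3 False2 False3 P2[OF o13] by blast
          qed
        qed
      next
        case False
        then have F: "m \<le> (\<Sum>xs\<in>win A n pp \<eta>. (1 - u xs) * ww xs)" using h2 by blast
        show ?thesis
        proof (cases "m \<le> (\<Sum>xs\<in>win A n t1 \<eta>. (1 - u xs) * ww xs)")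
          case True2: True
          show ?thesis by (rule P2[OF o12 True2 F])
        next
          case False2: False
          show ?thesis
          proof (cases "m \<le> (\<Sum>xs\<in>win A n t3 \<eta>. (1 - u xs) * ww xs)")
            case True3: True
            show ?thesis by (rule P2[OF o23 F True3])
          next
            case False3: False
            show ?thesis using h1 h3 False2 False3 P1[OF o13] by blast
          qed
        qed
      qed
    qed
    have "ZZ ^ n * exp (\<kappa> * real n) \<le> ZZ ^ n * exp (\<kappa> * real n) * (exp (\<kappa> * real n) / 4)"
      using ex4 ZZ_pos by (simp add: mult_le_cancel_left1)
    also have "\<dots> = ZZ ^ n / 4 * exp (real n * (2 * \<kappa>))"
    proof -
      have "exp (\<kappa> * real n) * exp (\<kappa> * real n) = exp (\<kappa> * real n + \<kappa> * real n)" by (rule exp_add[symmetric])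
      also have "\<kappa> * real n + \<kappa> * real n = real n * (2 * \<kappa>)" by simp
      finally show ?thesis by simp
    qed
    also have "\<dots> \<le> ZZ ^ n / 4 * exp (real n * (g * \<delta> / 2 - \<Lambda>))"
    proof -
      have "real n * (2 * \<kappa>) \<le> real n * (g * \<delta> / 2 - \<Lambda>)" using Lg by (intro mult_left_mono) (auto simp: \<kappa>_def mult.commute)
      then show ?thesis using ZZ_pos by (intro mult_left_mono) auto
    qed
    also have "\<dots> = m * exp (\<alpha> * (1 - \<alpha>) * (real n * \<bar>l0 - l1\<bar> * \<delta> / 2))"
    proof -
      have "real n * (g * \<delta> / 2 - \<Lambda>) = - real n * \<Lambda> + \<alpha> * (1 - \<alpha>) * (real n * \<bar>l0 - l1\<bar> * \<delta> / 2)"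
        by (simp add: g_def d_def algebra_simps)
      then show ?thesis unfolding m_def Mlow_def by (simp only: exp_add) simp
    qed
    also have "\<dots> \<le> FF n u" by (rule bound)
    finally show ?thesis .
  qed
  then show ?thesis using kpos by blast
qed
end


lemma pw_nth: "pw f xs = (\<Prod>i<length xs. f (xs ! i))"
proof (induction xs)
  case (Cons x xs)
  then show ?case by (simp add: prod.lessThan_Suc_shift del: prod.lessThan_Suc)
qed simp

lemma tensor_diag:
  assumes "xs \<in> words n" "ys \<in> words n"
  shows "tensor_pow (diag_op f) n xs ys = (if xs = ys then complex_of_real (pw f xs) else 0)"
proof (cases "xs = ys")
  case True
  then show ?thesis using assms by (simp add: tensor_pow_def diag_op_def pw_nth words_def)
next
  case False
  have len: "length xs = n" "length ys = n" using assms by (auto simp: words_def)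
  then obtain i where i: "i < n" "xs ! i \<noteq> ys ! i" using False nth_equalityI by metis
  have "tensor_pow (diag_op f) n xs ys = 0"
    unfolding tensor_pow_def by (rule prod_zero) (use i in \<open>auto simp: diag_op_def\<close>)
  then show ?thesis using False by simp
qed

lemma test_diag:
  fixes T :: "('a::finite) list \<Rightarrow> 'a list \<Rightarrow> complex"
  assumes T: "is_test (words n) T" and xs: "xs \<in> words n"
  shows "0 \<le> Re (T xs xs)" "Re (T xs xs) \<le> 1"
proof -
  define v where "v i = (if i = xs then 1 else 0::complex)" for i
  have fin: "finite (words n :: 'a list set)" by (rule words_finite)
  have q: "quad_form (words n) T v = T xs xs"
  proof -
    have i1: "(\<Sum>j\<in>words n. cnj (v i) * T i j * v j) = cnj (v i) * T i xs" for i
    proof -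
      have "(\<Sum>j\<in>words n. cnj (v i) * T i j * v j) = (\<Sum>j\<in>words n. if j = xs then cnj (v i) * T i j else 0)"
        by (rule sum.cong) (auto simp: v_def)
      also have "\<dots> = cnj (v i) * T i xs" using fin xs by (simp add: sum.delta')
      finally show ?thesis .
    qed
    have "quad_form (words n) T v = (\<Sum>i\<in>words n. cnj (v i) * T i xs)"
      unfolding quad_form_def by (simp add: i1)
    also have "\<dots> = (\<Sum>i\<in>words n. if i = xs then T i xs else 0)"
      by (rule sum.cong) (auto simp: v_def)
    also have "\<dots> = T xs xs" using fin xs by (simp add: sum.delta')
    finally show ?thesis .
  qed
  have nv: "(\<Sum>i\<in>words n. (cmod (v i))\<^sup>2) = 1"
    unfolding v_def using fin xs by (simp add: if_distrib[of "\<lambda>z. (cmod z)^2"] sum.delta cong: if_cong)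
  show "0 \<le> Re (T xs xs)" "Re (T xs xs) \<le> 1" using T unfolding is_test_def
    by (metis q nv)+
qed

lemma trace_diag:
  fixes T :: "('a::finite) list \<Rightarrow> 'a list \<Rightarrow> complex"
  assumes "is_test (words n) T"
  shows "Re (trace_prod (words n) (tensor_pow (diag_op f) n) T) = (\<Sum>xs\<in>words n. Re (T xs xs) * pw f xs)"
    and "Re (trace_prod (words n) (tensor_pow (diag_op f) n) (\<lambda>i j. id_op i j - T i j)) = (\<Sum>xs\<in>words n. (1 - Re (T xs xs)) * pw f xs)"
proof -
  have fin: "finite (words n :: 'a list set)" by (rule words_finite)
  have inner: "(\<Sum>ys\<in>words n. tensor_pow (diag_op f) n xs ys * S ys xs) = complex_of_real (pw f xs) * S xs xs"
    if xs: "xs \<in> words n" for xs and S :: "'a list \<Rightarrow> 'a list \<Rightarrow> complex"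
  proof -
    have "(\<Sum>ys\<in>words n. tensor_pow (diag_op f) n xs ys * S ys xs) = (\<Sum>ys\<in>words n. if xs = ys then complex_of_real (pw f xs) * S ys xs else 0)"
      by (rule sum.cong) (auto simp: tensor_diag[OF xs])
    also have "\<dots> = complex_of_real (pw f xs) * S xs xs" using fin xs by (simp add: sum.delta)
    finally show ?thesis .
  qed
  show "Re (trace_prod (words n) (tensor_pow (diag_op f) n) T) = (\<Sum>xs\<in>words n. Re (T xs xs) * pw f xs)"
  proof -
    have "trace_prod (words n) (tensor_pow (diag_op f) n) T = (\<Sum>xs\<in>words n. complex_of_real (pw f xs) * T xs xs)"
      unfolding trace_prod_def by (rule sum.cong) (simp_all add: inner)
    then show ?thesis by (simp add: mult.commute)
  qed
  show "Re (trace_prod (words n) (tensor_pow (diag_op f) n) (\<lambda>i j. id_op i j - T i j)) = (\<Sum>xs\<in>words n. (1 - Re (T xs xs)) * pw f xs)"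
  proof -
    have "trace_prod (words n) (tensor_pow (diag_op f) n) (\<lambda>i j. id_op i j - T i j) = (\<Sum>xs\<in>words n. complex_of_real (pw f xs) * (1 - T xs xs))"
      unfolding trace_prod_def
    proof (rule sum.cong[OF refl])
      fix xs :: "'a list" assume xs: "xs \<in> words n"
      show "(\<Sum>ys\<in>words n. tensor_pow (diag_op f) n xs ys * (id_op ys xs - T ys xs)) = complex_of_real (pw f xs) * (1 - T xs xs)"
        using inner[OF xs, of "\<lambda>i j. id_op i j - T i j"] by (simp add: id_op_def)
    qed
    then show ?thesis by (simp add: mult.commute)
  qed
qed

lemma renyi_pair_eq:
  "renyi_pair \<alpha> (p1, p2) (q1, q2) = 1 / (\<alpha> - 1) * ln (p1 powr \<alpha> * q1 powr (1 - \<alpha>) + p2 powr \<alpha> * q2 powr (1 - \<alpha>))"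
  by (simp add: renyi_pair_def renyi_def UNIV_bool add.commute)


lemma zero_test: "is_test I (\<lambda>i j. 0)"
  by (simp add: is_test_def quad_form_def sum_nonneg)

lemma diag01_test:
  fixes e :: "'i \<Rightarrow> bool"
  assumes fin: "finite I"
  shows "is_test I (\<lambda>i j. if i = j \<and> e i then 1 else 0)"
proof -
  have q: "quad_form I (\<lambda>i j. if i = j \<and> e i then 1 else 0) v = complex_of_real (\<Sum>i\<in>I. (if e i then 1 else 0) * (cmod (v i))\<^sup>2)" for v
  proof -
    have i1: "(\<Sum>j\<in>I. cnj (v i) * (if i = j \<and> e i then 1 else 0) * v j) = (if i \<in> I then complex_of_real ((if e i then 1 else 0) * (cmod (v i))\<^sup>2) else 0)" for i
    proof -
      have "(\<Sum>j\<in>I. cnj (v i) * (if i = j \<and> e i then 1 else 0) * v j) = (\<Sum>j\<in>I. if j = i then (if e i then cnj (v i) * v i else 0) else 0)"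
        by (rule sum.cong) auto
      also have "\<dots> = (if i \<in> I then (if e i then cnj (v i) * v i else 0) else 0)" using fin by (simp add: sum.delta')
      also have "cnj (v i) * v i = complex_of_real ((cmod (v i))\<^sup>2)" by (metis complex_norm_square mult.commute)
      finally show ?thesis by simp
    qed
    show ?thesis unfolding quad_form_def i1 by (simp add: of_real_sum)
  qed
  show ?thesis unfolding is_test_def q
  proof (intro allI conjI)
    fix v :: "'i \<Rightarrow> complex"
    show "complex_of_real (\<Sum>i\<in>I. (if e i then 1 else 0) * (cmod (v i))\<^sup>2) \<in> \<real>" by simp
    show "0 \<le> Re (complex_of_real (\<Sum>i\<in>I. (if e i then 1 else 0) * (cmod (v i))\<^sup>2))"
      by (simp add: sum_nonneg)
    show "Re (complex_of_real (\<Sum>i\<in>I. (if e i then 1 else 0) * (cmod (v i))\<^sup>2)) \<le> (\<Sum>i\<in>I. (cmod (v i))\<^sup>2)"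
      by (simp, rule sum_mono) auto
  qed
qed

theorem mainTheorem3:
  fixes \<rho> \<sigma> :: "'a::finite \<Rightarrow> real" and \<Omega>0 :: "'a set" and \<alpha> :: real
  assumes "prob_vec \<rho>" and "prob_vec \<sigma>" and "\<rho> \<noteq> \<sigma>"
    and "\<And>w. w \<in> \<Omega>0 \<Longrightarrow> sum \<sigma> \<Omega>0 * \<rho> w = sum \<rho> \<Omega>0 * \<sigma> w"
    and "\<And>w. w \<in> - \<Omega>0 \<Longrightarrow> sum \<sigma> (- \<Omega>0) * \<rho> w = sum \<rho> (- \<Omega>0) * \<sigma> w"
    and "sum \<rho> \<Omega>0 \<noteq> 0" and "sum \<sigma> \<Omega>0 \<noteq> 0"
    and "sum \<rho> (- \<Omega>0) \<noteq> 0" and "sum \<sigma> (- \<Omega>0) \<noteq> 0"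
    and "0 < \<alpha>" and "\<alpha> < 1"
  shows "limsup (\<lambda>n. ereal (D_test_n \<alpha> \<rho> \<sigma> n / real n))
           < (SUP n\<in>{1..}. ereal (D_test_n \<alpha> \<rho> \<sigma> n / real n))
       \<and> (SUP n\<in>{1..}. ereal (D_test_n \<alpha> \<rho> \<sigma> n / real n)) = ereal (renyi UNIV \<alpha> \<rho> \<sigma>)"
proof -
  note pv = assms(1,2)[unfolded prob_vec_def]
  have split: "sum f UNIV = sum f \<Omega>0 + sum f (-\<Omega>0)" for f :: "'a \<Rightarrow> real"
  proof -
    have "sum f UNIV = sum f (\<Omega>0 \<union> -\<Omega>0)" by simp
    also have "\<dots> = sum f \<Omega>0 + sum f (-\<Omega>0)" by (rule sum.union_disjoint) auto
    finally show ?thesis .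
  qed
  define a where "a = sum \<rho> \<Omega>0"
  define b where "b = sum \<sigma> \<Omega>0"
  have ra: "sum \<rho> (-\<Omega>0) = 1 - a" using split[of \<rho>] pv by (simp add: a_def)
  have sb: "sum \<sigma> (-\<Omega>0) = 1 - b" using split[of \<sigma>] pv by (simp add: b_def)
  have a0: "0 < a" using assms(6) pv by (simp add: a_def order_less_le sum_nonneg)
  have b0: "0 < b" using assms(7) pv by (simp add: b_def order_less_le sum_nonneg)
  have a1: "a < 1"
  proof -
    have "0 \<le> sum \<rho> (-\<Omega>0)" using pv by (simp add: sum_nonneg)
    then show ?thesis using assms(8) ra by simp
  qed
  have b1: "b < 1"
  proof -
    have "0 \<le> sum \<sigma> (-\<Omega>0)" using pv by (simp add: sum_nonneg)
    then show ?thesis using assms(9) sb by simp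
  qed
  define c where "c w = (if w \<in> \<Omega>0 then \<rho> w / a else \<rho> w / (1 - a))" for w
  have c_nn: "\<And>w. 0 \<le> c w" using pv a0 a1 by (simp add: c_def)
  have cA: "sum c \<Omega>0 = 1"
  proof -
    have "sum c \<Omega>0 = sum (\<lambda>w. \<rho> w / a) \<Omega>0" by (rule sum.cong) (auto simp: c_def)
    then show ?thesis using a0 by (simp add: sum_divide_distrib[symmetric] a_def)
  qed
  have cB: "sum c (-\<Omega>0) = 1"
  proof -
    have "sum c (-\<Omega>0) = sum (\<lambda>w. \<rho> w / (1 - a)) (-\<Omega>0)" by (rule sum.cong) (auto simp: c_def)
    then show ?thesis using a1 ra by (simp add: sum_divide_distrib[symmetric])
  qed
  have rho_eq: "\<rho> = nu c \<Omega>0 a"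
    using a0 a1 by (auto simp: fun_eq_iff nu_def c_def)
  have sig_eq: "\<sigma> = nu c \<Omega>0 b"
  proof
    fix w
    show "\<sigma> w = nu c \<Omega>0 b w"
    proof (cases "w \<in> \<Omega>0")
      case True
      then have "b * \<rho> w = a * \<sigma> w" using assms(4)[OF True] by (simp add: a_def b_def)
      then show ?thesis using True a0 by (simp add: nu_def c_def field_simps)
    next
      case False
      then have "(1 - b) * \<rho> w = (1 - a) * \<sigma> w" using assms(5)[of w] ra sb by simp
      then show ?thesis using False a1 by (simp add: nu_def c_def field_simps)
    qed
  qed
  have ab: "a \<noteq> b" using assms(3) rho_eq sig_eq by auto
  note H = c_nn cA cB a0 a1 b0 b1 ab assms(10,11)
  define D1 where "D1 = 1 / (\<alpha> - 1) * ln (ZZ a b \<alpha>)"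
  have Zpos: "0 < ZZ a b \<alpha>" by (rule ZZ_pos[OF H])
  have neg: "1 / (\<alpha> - 1) < 0" using assms(11) by simp
  have val: "renyi_pair \<alpha> (test_meas (words n) T (tensor_pow (diag_op \<rho>) n)) (test_meas (words n) T (tensor_pow (diag_op \<sigma>) n))
      = 1 / (\<alpha> - 1) * ln (FF c \<Omega>0 a b \<alpha> n (\<lambda>xs. Re (T xs xs)))" if T: "is_test (words n) T" for n and T :: "'a list \<Rightarrow> 'a list \<Rightarrow> complex"
    unfolding test_meas_def trace_diag[OF T] renyi_pair_eq FF_def[OF H] rho_eq sig_eq ..
  have uT: "\<And>xs. xs \<in> words n \<Longrightarrow> 0 \<le> Re (T xs xs) \<and> Re (T xs xs) \<le> 1" if T: "is_test (words n) T" for n and T :: "'a list \<Rightarrow> 'a list \<Rightarrow> complex"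
    using test_diag[OF T] by auto
  have elem_bound: "1 / (\<alpha> - 1) * ln (FF c \<Omega>0 a b \<alpha> n u) \<le> 1 / (\<alpha> - 1) * ln L"
    if "0 < L" "L \<le> FF c \<Omega>0 a b \<alpha> n u" for n u L
  proof -
    have l: "ln L \<le> ln (FF c \<Omega>0 a b \<alpha> n u)" using that by simp
    show ?thesis using mult_left_mono_neg[OF l, of "1 / (\<alpha> - 1)"] neg by linarith
  qed
  have nonempty: "{T. is_test (words n) T} \<noteq> {}" for n :: nat
    using zero_test by blast
  have upper: "D_test_n \<alpha> \<rho> \<sigma> n \<le> real n * D1" for n
    unfolding D_test_n_def D_test_def
  proof (rule cSUP_least[OF nonempty])
    fix T :: "'a list \<Rightarrow> 'a list \<Rightarrow> complex" assume "T \<in> {T. is_test (words n) T}"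
    then have T: "is_test (words n) T" by simp
    have "1 / (\<alpha> - 1) * ln (FF c \<Omega>0 a b \<alpha> n (\<lambda>xs. Re (T xs xs))) \<le> 1 / (\<alpha> - 1) * ln (ZZ a b \<alpha> ^ n)"
      using Zpos claim1[OF H uT[OF T]] by (intro elem_bound) auto
    also have "\<dots> = real n * D1" using Zpos by (simp add: D1_def ln_realpow)
    finally show "renyi_pair \<alpha> (test_meas (words n) T (tensor_pow (diag_op \<rho>) n)) (test_meas (words n) T (tensor_pow (diag_op \<sigma>) n)) \<le> real n * D1"
      using val[OF T] by simp
  qed
  obtain \<kappa> N where kpos: "0 < \<kappa>" and kN: "\<forall>n\<ge>N. \<forall>u. (\<forall>xs\<in>words n. 0 \<le> u xs \<and> u xs \<le> 1) \<longrightarrow> ZZ a b \<alpha> ^ n * exp (\<kappa> * real n) \<le> FF c \<Omega>0 a b \<alpha> n u"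
    using claim2[OF H] by blast
  have upper2: "D_test_n \<alpha> \<rho> \<sigma> n \<le> real n * (D1 + \<kappa> / (\<alpha> - 1))" if nN: "n \<ge> N" for n
    unfolding D_test_n_def D_test_def
  proof (rule cSUP_least[OF nonempty])
    fix T :: "'a list \<Rightarrow> 'a list \<Rightarrow> complex" assume "T \<in> {T. is_test (words n) T}"
    then have T: "is_test (words n) T" by simp
    have "1 / (\<alpha> - 1) * ln (FF c \<Omega>0 a b \<alpha> n (\<lambda>xs. Re (T xs xs))) \<le> 1 / (\<alpha> - 1) * ln (ZZ a b \<alpha> ^ n * exp (\<kappa> * real n))"
      using Zpos kN nN uT[OF T] by (intro elem_bound) auto
    also have "\<dots> = real n * (D1 + \<kappa> / (\<alpha> - 1))" using Zpos by (simp add: D1_def ln_mult ln_realpow algebra_simps)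
    finally show "renyi_pair \<alpha> (test_meas (words n) T (tensor_pow (diag_op \<rho>) n)) (test_meas (words n) T (tensor_pow (diag_op \<sigma>) n)) \<le> real n * (D1 + \<kappa> / (\<alpha> - 1))"
      using val[OF T] by simp
  qed
  define T1 where "T1 = (\<lambda>xs ys. if xs = ys \<and> hd xs \<in> \<Omega>0 then 1 else (0::complex))"
  have T1: "is_test (words 1) T1"
    unfolding T1_def by (rule diag01_test[OF words_finite])
  have sum1: "(\<Sum>xs\<in>words 1. f xs) = (\<Sum>x\<in>UNIV. f [x])" for f :: "'a list \<Rightarrow> real"
    using sum_words_Suc[of f 0] by (simp add: words_0)
  have FF1: "FF c \<Omega>0 a b \<alpha> 1 (\<lambda>xs. Re (T1 xs xs)) = ZZ a b \<alpha>"
  proof -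
    have s: "(\<Sum>x\<in>UNIV. (if x \<in> \<Omega>0 then 1 else 0) * nu c \<Omega>0 t x) = sum (nu c \<Omega>0 t) \<Omega>0"
            "(\<Sum>x\<in>UNIV. (1 - (if x \<in> \<Omega>0 then 1 else 0)) * nu c \<Omega>0 t x) = sum (nu c \<Omega>0 t) (-\<Omega>0)" for t
    proof -
      have "(\<Sum>x\<in>UNIV. (if x \<in> \<Omega>0 then 1 else 0) * nu c \<Omega>0 t x) = (\<Sum>x\<in>UNIV. if x \<in> \<Omega>0 then nu c \<Omega>0 t x else 0)"
        by (rule sum.cong) auto
      also have "\<dots> = sum (nu c \<Omega>0 t) \<Omega>0" by (simp add: sum.If_cases Int_def)
      finally show "(\<Sum>x\<in>UNIV. (if x \<in> \<Omega>0 then 1 else 0) * nu c \<Omega>0 t x) = sum (nu c \<Omega>0 t) \<Omega>0" .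
      have "(\<Sum>x\<in>UNIV. (1 - (if x \<in> \<Omega>0 then 1 else 0)) * nu c \<Omega>0 t x) = (\<Sum>x\<in>UNIV. if x \<in> \<Omega>0 then 0 else nu c \<Omega>0 t x)"
        by (rule sum.cong) auto
      also have "\<dots> = sum (nu c \<Omega>0 t) (-\<Omega>0)" by (simp add: sum.If_cases Int_def Compl_eq)
      finally show "(\<Sum>x\<in>UNIV. (1 - (if x \<in> \<Omega>0 then 1 else 0)) * nu c \<Omega>0 t x) = sum (nu c \<Omega>0 t) (-\<Omega>0)" .
    qed
    have sA: "sum (nu c \<Omega>0 t) \<Omega>0 = t" and sB: "sum (nu c \<Omega>0 t) (-\<Omega>0) = 1 - t" for t
      using cA cB by (simp_all add: nu_def sum_distrib_right[symmetric])
    have "FF c \<Omega>0 a b \<alpha> 1 (\<lambda>xs. Re (T1 xs xs)) = a powr \<alpha> * b powr (1 - \<alpha>) + (1 - a) powr \<alpha> * (1 - b) powr (1 - \<alpha>)"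
    proof -
      have re: "Re (if P then 1 else 0) = (if P then 1 else (0::real))" for P by simp
      show ?thesis unfolding FF_def[OF H] sum1 T1_def by (simp only: re if_True list.sel simp_thms pw_Cons pw_Nil mult_1_right s sA sB)
    qed
    also have "\<dots> = ZZ a b \<alpha>"
      using a0 a1 b0 b1 by (simp add: ZZ_def[OF H] x0_def[OF H] y0_def[OF H] powr_def exp_add)
    finally show ?thesis .
  qed
  have bdd: "bdd_above ((\<lambda>T. renyi_pair \<alpha> (test_meas (words n) T (tensor_pow (diag_op \<rho>) n)) (test_meas (words n) T (tensor_pow (diag_op \<sigma>) n))) ` {T. is_test (words n) T})" for n
  proof (rule bdd_aboveI2)
    fix T :: "'a list \<Rightarrow> 'a list \<Rightarrow> complex" assume "T \<in> {T. is_test (words n) T}"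
    then have T: "is_test (words n) T" by simp
    have "1 / (\<alpha> - 1) * ln (FF c \<Omega>0 a b \<alpha> n (\<lambda>xs. Re (T xs xs))) \<le> 1 / (\<alpha> - 1) * ln (ZZ a b \<alpha> ^ n)"
      using Zpos claim1[OF H uT[OF T]] by (intro elem_bound) auto
    then show "renyi_pair \<alpha> (test_meas (words n) T (tensor_pow (diag_op \<rho>) n)) (test_meas (words n) T (tensor_pow (diag_op \<sigma>) n)) \<le> 1 / (\<alpha> - 1) * ln (ZZ a b \<alpha> ^ n)"
      using val[OF T] by simp
  qed
  have lower1: "D1 \<le> D_test_n \<alpha> \<rho> \<sigma> 1"
  proof -
    have "D1 = renyi_pair \<alpha> (test_meas (words 1) T1 (tensor_pow (diag_op \<rho>) 1)) (test_meas (words 1) T1 (tensor_pow (diag_op \<sigma>) 1))"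
      using val[OF T1] FF1 by (simp add: D1_def)
    also have "\<dots> \<le> D_test_n \<alpha> \<rho> \<sigma> 1"
      unfolding D_test_n_def D_test_def by (rule cSUP_upper[OF _ bdd]) (use T1 in simp)
    finally show ?thesis .
  qed
  have renyi_eq: "renyi UNIV \<alpha> \<rho> \<sigma> = D1"
  proof -
    have pt: "\<rho> w powr \<alpha> * \<sigma> w powr (1 - \<alpha>) = c w * (if w \<in> \<Omega>0 then x0 a b \<alpha> else y0 a b \<alpha>)" for w
    proof -
      have cc: "c w powr \<alpha> * c w powr (1 - \<alpha>) = c w"
      proof (cases "c w = 0")
        case False
        have "c w powr \<alpha> * c w powr (1 - \<alpha>) = c w powr (\<alpha> + (1 - \<alpha>))" by (rule powr_add[symmetric])
        then show ?thesis using c_nn[of w] False by simp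
      qed simp
      have xa: "a powr \<alpha> * b powr (1 - \<alpha>) = x0 a b \<alpha>" using a0 b0 by (simp add: x0_def[OF H] powr_def exp_add)
      have ya: "(1 - a) powr \<alpha> * (1 - b) powr (1 - \<alpha>) = y0 a b \<alpha>" using a1 b1 by (simp add: y0_def[OF H] powr_def exp_add)
      have g: "(c w * p) powr \<alpha> * (c w * q) powr (1 - \<alpha>) = (c w powr \<alpha> * c w powr (1 - \<alpha>)) * (p powr \<alpha> * q powr (1 - \<alpha>))"
        if "0 \<le> p" "0 \<le> q" for p q
        using that c_nn[of w] by (simp add: powr_mult mult_ac)
      show ?thesis unfolding rho_eq sig_eq nu_def
        using a0 a1 b0 b1 by (auto simp: g cc xa ya)
    qed
    have "(\<Sum>w\<in>UNIV. \<rho> w powr \<alpha> * \<sigma> w powr (1 - \<alpha>)) = (\<Sum>w\<in>\<Omega>0. c w * x0 a b \<alpha>) + (\<Sum>w\<in>-\<Omega>0. c w * y0 a b \<alpha>)"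
      unfolding pt split[of "\<lambda>w. c w * (if w \<in> \<Omega>0 then x0 a b \<alpha> else y0 a b \<alpha>)"]
      by (intro arg_cong2[where f="(+)"] sum.cong) auto
    also have "\<dots> = ZZ a b \<alpha>" using cA cB by (simp add: sum_distrib_right[symmetric] ZZ_def[OF H])
    finally show ?thesis by (simp add: renyi_def D1_def)
  qed
  have SUPeq: "(SUP n\<in>{1..}. ereal (D_test_n \<alpha> \<rho> \<sigma> n / real n)) = ereal D1"
  proof (rule antisym)
    show "(SUP n\<in>{1..}. ereal (D_test_n \<alpha> \<rho> \<sigma> n / real n)) \<le> ereal D1"
    proof (rule SUP_least)
      fix n :: nat assume "n \<in> {1..}"
      then have n: "0 < real n" by simp
      have "D_test_n \<alpha> \<rho> \<sigma> n / real n \<le> D1" using upper[of n] n by (simp add: divide_le_eq mult.commute)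
      then show "ereal (D_test_n \<alpha> \<rho> \<sigma> n / real n) \<le> ereal D1" by simp
    qed
    have "ereal D1 \<le> ereal (D_test_n \<alpha> \<rho> \<sigma> 1 / real 1)" using lower1 by simp
    also have "\<dots> \<le> (SUP n\<in>{1..}. ereal (D_test_n \<alpha> \<rho> \<sigma> n / real n))" by (rule SUP_upper) simp
    finally show "ereal D1 \<le> (SUP n\<in>{1..}. ereal (D_test_n \<alpha> \<rho> \<sigma> n / real n))" .
  qed
  have lim: "limsup (\<lambda>n. ereal (D_test_n \<alpha> \<rho> \<sigma> n / real n)) \<le> ereal (D1 + \<kappa> / (\<alpha> - 1))"
  proof (rule Limsup_bounded)
    show "\<forall>\<^sub>F n in sequentially. ereal (D_test_n \<alpha> \<rho> \<sigma> n / real n) \<le> ereal (D1 + \<kappa> / (\<alpha> - 1))"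
      unfolding eventually_sequentially
    proof (intro exI allI impI)
      fix n assume "max N 1 \<le> n"
      then have nN: "N \<le> n" and n: "0 < real n" by auto
      show "ereal (D_test_n \<alpha> \<rho> \<sigma> n / real n) \<le> ereal (D1 + \<kappa> / (\<alpha> - 1))"
        using upper2[OF nN] n by (simp add: divide_le_eq mult.commute)
    qed
  qed
  have "D1 + \<kappa> / (\<alpha> - 1) < D1" using kpos assms(11) by (simp add: divide_pos_neg)
  then have "limsup (\<lambda>n. ereal (D_test_n \<alpha> \<rho> \<sigma> n / real n)) < ereal D1"
  proof -
    assume lt: "D1 + \<kappa> / (\<alpha> - 1) < D1"
    have "ereal (D1 + \<kappa> / (\<alpha> - 1)) < ereal D1" using lt by simp
    then show ?thesis using lim by (rule le_less_trans[rotated])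
  qed
  then show ?thesis using SUPeq renyi_eq by simp
qed

end
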